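(* Let $U=(u_1,\dots,u_n)$ and $V=(v_1,\dots,v_n)$ be complex vectors of the same dimension $n$, let $A=(a_1,\dots,a_{n'})$ be a complex vector, and set $R=(V,A)$, $W=(U,A)$ (vectors of dimension $N=n+n'$). Let $p_1,\dots,p_N:\mathbb C\to\mathbb C$ and $\mathcal G(\alpha_1,\dots,\alpha_N)=\det[p_i(\alpha_j)]_{i,j=1}^N/\det[\alpha_j^{i-1}]_{i,j=1}^N$. Assume the components of $R$ are distinct, the components of $W$ are distinct, and $\mathcal G(R)\ne0$. Then $$\frac{\mathcal G(W)}{\mathcal G(R)}=(-1)^{\binom n2}\det\Big[\frac{\mathcal G(R^{i,j})}{\mathcal G(R)(u_j-v_i)}\Big]_{i,j=1}^n\frac{\Delta(U;V)}{\Delta(U)\Delta(V)},$$ where $R^{i,j}$ is the vector $R$ with the component $v_i$ replaced by $u_j$.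
   Context: $\Delta(U)=\prod_{1\le i<j\le n}(u_j-u_i)$ and $\Delta(U;V)=\prod_{i=1}^n\prod_{j=1}^n(u_i-v_j)$. *)

theory Defs
  imports Complex_Main "Jordan_Normal_Form.Determinant"
begin

text \<open>Vectors are functions on 0-based indices; a vector of dimension N is
  a function nat => complex, of which only the values at 0..N-1 matter.\<close>

definition calG :: "nat \<Rightarrow> (nat \<Rightarrow> complex \<Rightarrow> complex) \<Rightarrow> (nat \<Rightarrow> complex) \<Rightarrow> complex" where
  "calG N p \<alpha> = det (mat N N (\<lambda>(i,j). p i (\<alpha> j))) / det (mat N N (\<lambda>(i,j). \<alpha> j ^ i))"

definition Delta :: "nat \<Rightarrow> (nat \<Rightarrow> complex) \<Rightarrow> complex" where
  "Delta n U = (\<Prod>j<n. \<Prod>i<j. U j - U i)"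

definition Delta2 :: "nat \<Rightarrow> (nat \<Rightarrow> complex) \<Rightarrow> (nat \<Rightarrow> complex) \<Rightarrow> complex" where
  "Delta2 n U V = (\<Prod>i<n. \<Prod>j<n. U i - V j)"

definition concat_vec :: "nat \<Rightarrow> (nat \<Rightarrow> complex) \<Rightarrow> (nat \<Rightarrow> complex) \<Rightarrow> nat \<Rightarrow> complex" where
  "concat_vec n X Y = (\<lambda>k. if k < n then X k else Y (k - n))"

end

theory Submission imports Defs begin

lemma Delta_Suc: "Delta (Suc N) a = Delta N a * (\<Prod>k<N. a N - a k)"
  by (simp add: Delta_def)

lemma Delta_cong: "(\<And>k. k < n \<Longrightarrow> f k = g k) \<Longrightarrow> Delta n f = Delta n g"
  unfolding Delta_def by (intro prod.cong refl) auto

lemma Delta_upd: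
  "i < N \<Longrightarrow> Delta N (a(i:=x)) * (\<Prod>k\<in>{..<N}-{i}. a i - a k)
     = Delta N a * (\<Prod>k\<in>{..<N}-{i}. x - a k)"
proof (induction N arbitrary: i)
  case 0 then show ?case by simp
next
  case (Suc N)
  show ?case
  proof (cases "i = N")
    case True
    have e: "{..<Suc N} - {i} = {..<N}" using True by auto
    have d: "Delta N (a(i:=x)) = Delta N a" using True by (intro Delta_cong) auto
    have q: "(\<Prod>k<N. (a(i:=x)) N - (a(i:=x)) k) = (\<Prod>k<N. x - a k)"
      using True by (intro prod.cong) auto
    show ?thesis unfolding e Delta_Suc d q using True by simp
  next
    case False
    then have iN: "i < N" using Suc by auto
    have e: "{..<Suc N} - {i} = insert N ({..<N} - {i})" using iN by auto
    have T: "(\<Prod>k<N. b N - b k) = (b N - b i) * (\<Prod>k\<in>{..<N}-{i}. b N - b k)" for b :: "nat \<Rightarrow> complex"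
      using iN by (simp add: prod.remove)
    have q: "(\<Prod>k\<in>{..<N}-{i}. (a(i:=x)) N - (a(i:=x)) k) = (\<Prod>k\<in>{..<N}-{i}. a N - a k)"
      using False by (intro prod.cong) auto
    note IH = Suc.IH[OF iN]
    have fin: "finite ({..<N} - {i})" "N \<notin> {..<N} - {i}" by auto
    have l1: "Delta (Suc N) (a(i:=x)) = Delta N (a(i:=x)) * ((a N - x) * (\<Prod>k\<in>{..<N}-{i}. a N - a k))"
      unfolding Delta_Suc T[of "a(i:=x)"] q using False by simp
    have l2: "Delta (Suc N) a = Delta N a * ((a N - a i) * (\<Prod>k\<in>{..<N}-{i}. a N - a k))"
      unfolding Delta_Suc T[of a] by simp
    have l3: "(\<Prod>k\<in>{..<Suc N}-{i}. a i - a k) = (a i - a N) * (\<Prod>k\<in>{..<N}-{i}. a i - a k)"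
      unfolding e prod.insert[OF fin] ..
    have l4: "(\<Prod>k\<in>{..<Suc N}-{i}. x - a k) = (x - a N) * (\<Prod>k\<in>{..<N}-{i}. x - a k)"
      unfolding e prod.insert[OF fin] ..
    show ?thesis unfolding l1 l2 l3 l4
    proof -
      let ?T = "(\<Prod>k\<in>{..<N}-{i}. a N - a k)"
      have "Delta N (a(i := x)) * ((a N - x) * ?T) * ((a i - a N) * (\<Prod>k\<in>{..<N} - {i}. a i - a k))
        = (Delta N (a(i := x)) * (\<Prod>k\<in>{..<N} - {i}. a i - a k)) * ?T * ((a N - x) * (a i - a N))"
        by (simp only: ac_simps)
      also have "\<dots> = (Delta N a * (\<Prod>k\<in>{..<N} - {i}. x - a k)) * ?T * ((a N - a i) * (x - a N))"
        unfolding IH by (simp add: algebra_simps)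
      finally show "Delta N (a(i := x)) * ((a N - x) * ?T) * ((a i - a N) * (\<Prod>k\<in>{..<N} - {i}. a i - a k)) =
          Delta N a * ((a N - a i) * ?T) * ((x - a N) * (\<Prod>k\<in>{..<N} - {i}. x - a k))"
        by (simp only: ac_simps)
    qed
  qed
qed

lemma prod_lessThan_add: "(\<Prod>k<n+m. f (k::nat)) = (\<Prod>k<n. f k) * (\<Prod>k<m. (f (n+k)::complex))"
  by (induction m) (simp_all add: ac_simps)

lemma Delta_concat:
  "Delta (n+m) (concat_vec n X Y) = Delta n X * Delta m Y * (\<Prod>j<m. \<Prod>i<n. Y j - X i)"
proof (induction m)
  case 0
  show ?case by (simp add: Delta_def concat_vec_def)
next
  case (Suc m)
  have s: "(\<Prod>k<n+m. concat_vec n X Y (n+m) - concat_vec n X Y k)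
     = (\<Prod>k<n. Y m - X k) * (\<Prod>k<m. Y m - Y k)"
    unfolding prod_lessThan_add by (simp add: concat_vec_def)
  have "Delta (n + Suc m) (concat_vec n X Y) = Delta (n+m) (concat_vec n X Y) *
     (\<Prod>k<n+m. concat_vec n X Y (n+m) - concat_vec n X Y k)"
    using Delta_Suc[of "n+m"] by simp
  also have "\<dots> = Delta n X * (Delta m Y * (\<Prod>k<m. Y m - Y k)) * ((\<Prod>j<m. \<Prod>i<n. Y j - X i) * (\<Prod>k<n. Y m - X k))"
    unfolding s Suc by (simp only: ac_simps)
  finally show ?case by (simp add: Delta_Suc)
qed

lemma prod_neg_swap: "(\<Prod>k<n. (b::complex) - a k) = (-1)^n * (\<Prod>k<n. a k - b)"
proof -
  have "(\<Prod>k<n. b - a k) = (\<Prod>k<n. (-1) * (a k - b))" by simp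
  also have "\<dots> = (-1)^n * (\<Prod>k<n. a k - b)" unfolding prod.distrib by simp
  finally show ?thesis .
qed

lemma Delta_sq:
  "(\<Prod>i<n. \<Prod>k\<in>{..<n}-{i}. v i - v k) = (-1)^(n choose 2) * Delta n v ^ 2"
proof (induction n)
  case 0 then show ?case by (simp add: Delta_def numeral_2_eq_2)
next
  case (Suc n)
  have a: "(\<Prod>k\<in>{..<Suc n}-{i}. v i - v k) = (v i - v n) * (\<Prod>k\<in>{..<n}-{i}. v i - v k)" if "i < n" for i
  proof -
    have e: "{..<Suc n} - {i} = insert n ({..<n} - {i})" using that by auto
    show ?thesis unfolding e by (subst prod.insert) auto
  qed
  have b: "{..<Suc n} - {n} = {..<n}" by auto
  have "(\<Prod>i<Suc n. \<Prod>k\<in>{..<Suc n}-{i}. v i - v k)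
     = (\<Prod>i<n. (v i - v n) * (\<Prod>k\<in>{..<n}-{i}. v i - v k)) * (\<Prod>k<n. v n - v k)"
    by (simp add: a b)
  also have "\<dots> = (\<Prod>i<n. v i - v n) * (\<Prod>i<n. \<Prod>k\<in>{..<n}-{i}. v i - v k) * (\<Prod>k<n. v n - v k)"
    by (simp add: prod.distrib)
  also have "\<dots> = (-1)^n * (-1)^(n choose 2) * Delta n v ^ 2 * (\<Prod>k<n. v n - v k)^2"
    unfolding Suc prod_neg_swap[where b="v n" and a=v and n=n] by (simp add: power2_eq_square ac_simps)
  also have "\<dots> = (-1)^(Suc n choose 2) * Delta (Suc n) v ^ 2"
    by (simp add: Delta_Suc numeral_2_eq_2 power_add power_mult_distrib ac_simps)
  finally show ?case .
qed

lemma det_scale: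
  "det (mat n n (\<lambda>(i,j). r i * c j * f i j)) = prod r {0..<n} * prod c {0..<n} * det (mat n n (\<lambda>(i,j). f i j))"
proof -
  have A: "mat n n (\<lambda>(i,j). r i * c j * f i j) \<in> carrier_mat n n" "mat n n (\<lambda>(i,j). f i j) \<in> carrier_mat n n" by auto
  show ?thesis unfolding det_def'[OF A(1)] det_def'[OF A(2)] sum_distrib_left
  proof (rule sum.cong[OF refl])
    fix p assume p: "p \<in> {p. p permutes {0..<n}}"
    have "(\<Prod>i = 0..<n. mat n n (\<lambda>(i,j). r i * c j * f i j) $$ (i, p i))
       = (\<Prod>i = 0..<n. r i * c (p i) * f i (p i))"
      using p by (intro prod.cong) (auto simp: permutes_in_image)
    also have "\<dots> = prod r {0..<n} * (\<Prod>i = 0..<n. c (p i)) * (\<Prod>i = 0..<n. f i (p i))"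
      by (simp add: prod.distrib)
    also have "(\<Prod>i = 0..<n. c (p i)) = prod c {0..<n}"
      using prod.permute[of p "{0..<n}" c] p by (simp add: comp_def)
    also have "(\<Prod>i = 0..<n. f i (p i)) = (\<Prod>i = 0..<n. mat n n (\<lambda>(i,j). f i j) $$ (i, p i))"
      using p by (intro prod.cong) (auto simp: permutes_in_image)
    finally show "signof p * (\<Prod>i = 0..<n. mat n n (\<lambda>(i,j). r i * c j * f i j) $$ (i, p i)) =
      prod r {0..<n} * prod c {0..<n} * (signof p * (\<Prod>i = 0..<n. mat n n (\<lambda>(i,j). f i j) $$ (i, p i)))"
      by (simp add: ac_simps)
  qed
qed

lemma vandermonde: "det (mat N N (\<lambda>(i,j). a j ^ i)) = Delta N a"
proof (induction N)
  case 0 then show ?case by (simp add: Delta_def)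
next
  case (Suc N)
  define x where "x = a N"
  define M where "M = mat (Suc N) (Suc N) (\<lambda>(i,j). a j ^ i)"
  define L :: "complex mat" where "L = mat (Suc N) (Suc N) (\<lambda>(i,j). if i = j then 1 else if i = Suc j then -x else 0)"
  have M: "M \<in> carrier_mat (Suc N) (Suc N)" and L: "L \<in> carrier_mat (Suc N) (Suc N)"
    by (auto simp: M_def L_def)
  have dg: "diag_mat L = replicate (Suc N) 1"
    unfolding diag_mat_def by (rule nth_equalityI) (auto simp del: upt_Suc replicate_Suc simp: L_def)
  have dL: "det L = 1"
    using dg by (subst det_lower_triangular[OF _ L]) (auto simp: L_def diag_mat_def map_replicate_const)
  define Q where "Q = L * M"
  have Q: "Q \<in> carrier_mat (Suc N) (Suc N)" using L M by (simp add: Q_def)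
  have Qe: "Q $$ (i,j) = (if i = 0 then 1 else a j ^ (i - 1) * (a j - x))" if ij: "i < Suc N" "j < Suc N" for i j
  proof -
    have "Q $$ (i,j) = (\<Sum>k<Suc N. L $$ (i,k) * a j ^ k)"
      using ij L M by (simp add: Q_def scalar_prod_def M_def lessThan_atLeast0 row_def col_def)
    also have "\<dots> = (\<Sum>k<Suc N. (if k = i then a j ^ k else 0) + (if Suc k = i then - x * a j ^ k else 0))"
      using ij by (intro sum.cong refl) (auto simp: L_def)
    also have "\<dots> = a j ^ i + (if i = 0 then 0 else - x * a j ^ (i - 1))"
      using ij by (cases i) (auto simp: sum.distrib sum.delta')
    also have "\<dots> = (if i = 0 then 1 else a j ^ (i - 1) * (a j - x))"
      by (cases i) (auto simp: algebra_simps)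
    finally show ?thesis .
  qed
  have "det M = det Q" unfolding Q_def det_mult[OF L M] dL by simp
  also have "det Q = (\<Sum>i<Suc N. Q $$ (i,N) * cofactor Q i N)"
    by (rule laplace_expansion_column[OF Q]) simp
  also have "\<dots> = cofactor Q 0 N"
    by (subst sum.remove[of _ 0]) (auto simp: Qe x_def intro!: sum.neutral)
  also have "\<dots> = (-1)^N * det (mat N N (\<lambda>(i,j). 1 * (a j - x) * a j ^ i))"
    unfolding cofactor_def using Q
    by (auto intro!: arg_cong[of _ _ det] eq_matI simp: mat_delete_def Qe ac_simps)
  also have "\<dots> = (-1)^N * (\<Prod>j<N. a j - x) * Delta N a"
    unfolding det_scale Suc by (simp add: lessThan_atLeast0)
  also have "\<dots> = Delta (Suc N) a"
    unfolding Delta_Suc prod_neg_swap[where b="a N" and a=a and n=N] x_def by simp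
  finally show ?case unfolding M_def .
qed

lemma ratio_det:
  fixes q :: "nat \<Rightarrow> complex \<Rightarrow> complex" and R W :: "nat \<Rightarrow> complex"
  assumes dA: "det (mat (n+m) (n+m) (\<lambda>(i,j). q i (R j))) \<noteq> 0"
    and agree: "\<And>k. n \<le> k \<Longrightarrow> W k = R k"
  shows "det (mat (n+m) (n+m) (\<lambda>(i,j). q i (W j))) = det (mat (n+m) (n+m) (\<lambda>(i,j). q i (R j)))
     * det (mat n n (\<lambda>(i,j). det (mat (n+m) (n+m) (\<lambda>(k,l). q k ((R(i := W j)) l))) / det (mat (n+m) (n+m) (\<lambda>(i,j). q i (R j)))))"
proof -
  define N where "N = n + m"
  define A where "A = mat N N (\<lambda>(i,j). q i (R j))"
  define B where "B = mat N N (\<lambda>(i,j). q i (W j))"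
  define d where "d = det A"
  have d0: "d \<noteq> 0" using dA by (simp add: d_def A_def N_def)
  have A: "A \<in> carrier_mat N N" and B: "B \<in> carrier_mat N N" by (auto simp: A_def B_def)
  define Ai where "Ai = (1/d) \<cdot>\<^sub>m adj_mat A"
  have Ai: "Ai \<in> carrier_mat N N" using adj_mat(1)[OF A] by (simp add: Ai_def)
  have AAi: "A * Ai = 1\<^sub>m N"
    unfolding Ai_def using adj_mat[OF A] A d0
    by (simp add: mult_smult_distrib[OF A adj_mat(1)[OF A]] d_def, intro eq_matI, auto)
  have AiA: "Ai * A = 1\<^sub>m N" by (rule mat_mult_left_right_inverse[OF A Ai AAi])
  define X where "X = Ai * B"
  have X: "X \<in> carrier_mat N N" using Ai B by (simp add: X_def)
  have AX: "A * X = B" unfolding X_def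
    using A Ai B by (simp add: assoc_mult_mat[symmetric, OF A Ai B] AAi)
  have detB: "det B = d * det X" unfolding d_def AX[symmetric] by (rule det_mult[OF A X])
  have Xcol: "X $$ (i,j) = (Ai *\<^sub>v col B j) $ i" if "i < N" "j < N" for i j
  proof -
    have "X $$ (i,j) = col X j $ i" using that X by simp
    also have "col X j = Ai *\<^sub>v col B j" unfolding X_def using col_mult2[OF Ai B that(2)] .
    finally show ?thesis .
  qed
  have Xhi: "X $$ (i,j) = (if i = j then 1 else 0)" if "i < N" "j < N" "n \<le> j" for i j
  proof -
    have "col B j = col A j" using that agree by (auto simp: A_def B_def)
    then have "Ai *\<^sub>v col B j = col (Ai * A) j" using col_mult2[OF Ai A that(2)] by simp
    also have "\<dots> = col (1\<^sub>m N) j" unfolding AiA ..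
    finally show ?thesis using Xcol[OF that(1,2)] that by simp
  qed
  have Xlo: "X $$ (i,j) = det (mat N N (\<lambda>(k,l). q k ((R(i := W j)) l))) / d" if "i < N" "j < n" for i j
  proof -
    have jN: "j < N" using that by (simp add: N_def)
    define b where "b = col B j"
    define x where "x = Ai *\<^sub>v b"
    have b: "b \<in> carrier_vec N" using B jN by (simp add: b_def)
    have x: "x \<in> carrier_vec N" using Ai b by (simp add: x_def)
    have "A *\<^sub>v x = (A * Ai) *\<^sub>v b" unfolding x_def using A Ai b by simp
    also have "\<dots> = b" unfolding AAi using b by simp
    finally have Axb: "A *\<^sub>v x = b" .
    have rc: "replace_col A b i = mat N N (\<lambda>(k,l). q k ((R(i := W j)) l))"
      using jN by (auto intro!: eq_matI simp: replace_col_def A_def b_def B_def)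
    have "det (replace_col A b i) = x $ i * d"
      using cramer_lemma_mat[OF A x that(1)] Axb by (simp add: d_def)
    then show ?thesis using Xcol[OF that(1) jN] d0 rc by (simp add: x_def b_def field_simps)
  qed
  define X1 where "X1 = mat n n (\<lambda>(i,j). X $$ (i,j))"
  define X3 where "X3 = mat m n (\<lambda>(i,j). X $$ (i+n,j))"
  have Xfb: "X = four_block_mat X1 (0\<^sub>m n m) X3 (1\<^sub>m m)"
    using X by (intro eq_matI) (auto simp: four_block_mat_def X1_def X3_def Xhi N_def)
  have "det X = det X1 * det (1\<^sub>m m)"
    unfolding Xfb by (rule det_four_block_mat_upper_right_zero) (auto simp: X1_def X3_def)
  also have "X1 = mat n n (\<lambda>(i,j). det (mat N N (\<lambda>(k,l). q k ((R(i := W j)) l))) / d)"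
    by (intro eq_matI) (auto simp: X1_def Xlo N_def)
  finally have "det X = det (mat n n (\<lambda>(i,j). det (mat N N (\<lambda>(k,l). q k ((R(i := W j)) l))) / d))" by simp
  then show ?thesis using detB by (simp add: B_def d_def A_def N_def)
qed

lemma Delta_nz: "inj_on a {0..<N} \<Longrightarrow> Delta N a \<noteq> 0"
  unfolding Delta_def inj_on_def by (auto simp: prod_zero_iff) (metis atLeastLessThan_iff le0 less_trans less_irrefl)

lemma calG_eq: "calG N p a = det (mat N N (\<lambda>(i,j). p i (a j))) / Delta N a"
  unfolding calG_def vandermonde ..

lemma prod_remove_if: "i < (N::nat) \<Longrightarrow> (\<Prod>k\<in>{..<N}-{i}. g k) = (\<Prod>k<N. if k = i then 1 else (g k :: complex))"
proof -
  assume i: "i < N"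
  have "(\<Prod>k<N. if k = i then 1 else g k) = (if i = i then 1 else g i) * (\<Prod>k\<in>{..<N}-{i}. if k = i then 1 else g k)"
    using i by (subst prod.remove[of "{..<N}" i]) auto
  also have "(\<Prod>k\<in>{..<N}-{i}. if k = i then 1 else g k) = (\<Prod>k\<in>{..<N}-{i}. g k)"
    by (intro prod.cong) auto
  finally show ?thesis by simp
qed

lemma prod_swap_neg: "(\<Prod>j<m. \<Prod>i<n. (a j :: complex) - b i) = (-1)^(n*m) * (\<Prod>i<n. \<Prod>j<m. b i - a j)"
proof -
  have "(\<Prod>j<m. \<Prod>i<n. a j - b i) = (\<Prod>j<m. (-1)^n * (\<Prod>i<n. b i - a j))"
    by (intro prod.cong refl prod_neg_swap)
  also have "\<dots> = (-1)^(n*m) * (\<Prod>j<m. \<Prod>i<n. b i - a j)"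
    by (simp add: prod.distrib power_mult)
  also have "(\<Prod>j<m. \<Prod>i<n. b i - a j) = (\<Prod>i<n. \<Prod>j<m. b i - a j)"
    by (rule prod.swap)
  finally show ?thesis .
qed

theorem lemma4p7:
  fixes n n' :: nat and U V A :: "nat \<Rightarrow> complex"
    and p :: "nat \<Rightarrow> complex \<Rightarrow> complex"
  defines "N \<equiv> n + n'"
  defines "R \<equiv> concat_vec n V A"
  defines "W \<equiv> concat_vec n U A"
  assumes R_distinct: "inj_on R {0..<N}"
    and W_distinct: "inj_on W {0..<N}"
    and UV_distinct: "\<forall>i<n. \<forall>j<n. U j \<noteq> V i"
    and G_nonzero: "calG N p R \<noteq> 0"
  shows "calG N p W / calG N p R =
    (-1) ^ (n choose 2)
    * det (mat n n (\<lambda>(i,j). calG N p (R(i := U j)) / (calG N p R * (U j - V i))))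
    * Delta2 n U V / (Delta n U * Delta n V)"
proof -
  define D where "D = (\<lambda>a. det (mat N N (\<lambda>(i,j). p i (a j))))"
  have G: "calG N p a = D a / Delta N a" for a unfolding calG_eq D_def ..
  define dA where "dA = D R"
  have dR: "Delta N R \<noteq> 0" by (rule Delta_nz[OF R_distinct])
  have dW: "Delta N W \<noteq> 0" by (rule Delta_nz[OF W_distinct])
  have dA0: "dA \<noteq> 0" using G_nonzero by (simp add: G dA_def)
  define Y where "Y = mat n n (\<lambda>(i,j). D (R(i := U j)) / dA)"
  have DW: "D W = dA * det Y"
  proof -
    have "D W = dA * det (mat n n (\<lambda>(i,j). D (R(i := W j)) / dA))"
      using ratio_det[of n n' p R W] dA0
      unfolding D_def dA_def N_def by (simp add: R_def W_def concat_vec_def)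
    also have "mat n n (\<lambda>(i,j). D (R(i := W j)) / dA) = Y"
      unfolding Y_def by (intro eq_matI) (auto simp: W_def concat_vec_def)
    finally show ?thesis .
  qed
  define P where "P = (\<lambda>i. \<Prod>k\<in>{..<N}-{i}. R i - R k)"
  define F where "F = (\<lambda>j. \<Prod>k<N. U j - R k)"
  have RV: "R i = V i" if "i < n" for i using that by (simp add: R_def concat_vec_def)
  have UR: "U j \<noteq> R k" if "j < n" "k < N" "k \<noteq> j \<or> n \<le> k" for j k
  proof (cases "k < n")
    case True then show ?thesis using UV_distinct that by (simp add: R_def concat_vec_def)
  next
    case False
    have "W j \<noteq> W k" by (rule inj_on_contraD[OF W_distinct]) (use that False in \<open>auto simp: N_def\<close>)
    then show ?thesis using that False by (simp add: W_def R_def concat_vec_def)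
  qed
  have UR': "U j \<noteq> R k" if "j < n" "k < N" for j k
  proof (cases "k = j")
    case True then show ?thesis using UV_distinct that RV[OF that(1)] by auto
  next
    case False then show ?thesis using UR[of j k] that by blast
  qed
  have P0: "P i \<noteq> 0" if i: "i < n" for i
  proof -
    have "R i - R k \<noteq> 0" if "k \<in> {..<N}-{i}" for k
      using inj_on_contraD[OF R_distinct, of i k] that i by (auto simp: N_def)
    then show ?thesis unfolding P_def by (subst prod_zero_iff) auto
  qed
  have F0: "F j \<noteq> 0" if "j < n" for j
    using UR' that unfolding F_def by (auto simp: prod_zero_iff)
  have entry: "calG N p (R(i := U j)) / (calG N p R * (U j - V i)) = P i * (1 / F j) * (D (R(i := U j)) / dA)"
    if ij: "i < n" "j < n" for i j
  proof -
    define Q where "Q = (\<Prod>k\<in>{..<N}-{i}. U j - R k)"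
    have iN: "i < N" using ij by (simp add: N_def)
    have up: "Delta N (R(i := U j)) * P i = Delta N R * Q"
      unfolding P_def Q_def by (rule Delta_upd[OF iN])
    have FQ: "F j = (U j - V i) * Q"
      unfolding F_def Q_def using iN RV[OF ij(1)] by (subst prod.remove[of _ i]) auto
    have uv: "U j - V i \<noteq> 0" using UV_distinct ij by auto
    have Q0: "Q \<noteq> 0" using F0[OF ij(2)] unfolding FQ by simp
    have d': "Delta N (R(i := U j)) = Delta N R * Q / P i" using up P0[OF ij(1)] by (simp add: field_simps)
    show ?thesis unfolding G d' FQ dA_def[symmetric] using P0[OF ij(1)] dR dA0 uv Q0
      by (simp add: field_simps)
  qed
  have detM: "det (mat n n (\<lambda>(i,j). calG N p (R(i := U j)) / (calG N p R * (U j - V i))))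
      = prod P {0..<n} * prod (\<lambda>j. 1 / F j) {0..<n} * det Y"
  proof -
    have "mat n n (\<lambda>(i,j). calG N p (R(i := U j)) / (calG N p R * (U j - V i)))
        = mat n n (\<lambda>(i,j). P i * (1 / F j) * (D (R(i := U j)) / dA))"
      by (intro eq_matI) (auto simp: entry)
    then show ?thesis unfolding Y_def by (simp only: det_scale)
  qed
  define XV where "XV = (\<Prod>i<n. \<Prod>l<n'. V i - A l)"
  define XU where "XU = (\<Prod>i<n. \<Prod>l<n'. U i - A l)"
  have XVs: "(\<Prod>j<n'. \<Prod>i<n. A j - V i) = (-1)^(n*n') * XV"
    unfolding XV_def by (rule prod_swap_neg)
  have XUs: "(\<Prod>j<n'. \<Prod>i<n. A j - U i) = (-1)^(n*n') * XU"
    unfolding XU_def by (rule prod_swap_neg)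
  have DR: "Delta N R = Delta n V * Delta n' A * ((-1)^(n*n') * XV)"
    unfolding N_def R_def Delta_concat XVs ..
  have DWf: "Delta N W = Delta n U * Delta n' A * ((-1)^(n*n') * XU)"
    unfolding N_def W_def Delta_concat XUs ..
  have prodF: "prod F {0..<n} = Delta2 n U V * XU"
  proof -
    have "F j = (\<Prod>k<n. U j - V k) * (\<Prod>l<n'. U j - A l)" for j
      unfolding F_def N_def prod_lessThan_add by (simp add: R_def concat_vec_def)
    then show ?thesis unfolding Delta2_def XU_def atLeast0LessThan by (simp add: prod.distrib)
  qed
  have prodP: "prod P {0..<n} = (-1)^(n choose 2) * Delta n V ^ 2 * XV"
  proof -
    have "P i = (\<Prod>k\<in>{..<n}-{i}. V i - V k) * (\<Prod>l<n'. V i - A l)" if i: "i < n" for i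
    proof -
      have "P i = (\<Prod>k<n+n'. if k = i then 1 else R i - R k)"
        unfolding P_def N_def using i by (intro prod_remove_if) simp
      also have "\<dots> = (\<Prod>k<n. if k = i then 1 else V i - V k) * (\<Prod>l<n'. V i - A l)"
      proof -
        have e1: "(\<Prod>k<n. if k = i then 1 else R i - R k) = (\<Prod>k<n. if k = i then 1 else V i - V k)"
          using i by (intro prod.cong) (auto simp: RV)
        have e2: "(\<Prod>k<n'. if n + k = i then 1 else R i - R (n+k)) = (\<Prod>l<n'. V i - A l)"
          using i by (intro prod.cong) (auto simp: RV R_def concat_vec_def)
        show ?thesis unfolding prod_lessThan_add e1 e2 ..
      qed
      also have "(\<Prod>k<n. if k = i then 1 else V i - V k) = (\<Prod>k\<in>{..<n}-{i}. V i - V k)"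
        using prod_remove_if[OF i, of "\<lambda>k. V i - V k"] by simp
      finally show ?thesis .
    qed
    then have "prod P {0..<n} = (\<Prod>i<n. \<Prod>k\<in>{..<n}-{i}. V i - V k) * XV"
      unfolding XV_def atLeast0LessThan by (simp add: prod.distrib)
    then show ?thesis unfolding Delta_sq .
  qed
  have dU: "Delta n U \<noteq> 0" and dV: "Delta n V \<noteq> 0" and XU0: "XU \<noteq> 0" and XV0: "XV \<noteq> 0"
    and dAA: "Delta n' A \<noteq> 0"
    using dR dW DR DWf by auto
  have sgn: "((-1::complex)^(n choose 2)) * (-1)^(n choose 2) = 1"
    by (simp add: power_add[symmetric] power_mult_distrib[symmetric] flip: mult_2 power_mult)
  have "calG N p W / calG N p R = det Y * (Delta N R / Delta N W)"
    unfolding G dA_def[symmetric] DW using dA0 dR dW by (simp add: field_simps)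
  also have "Delta N R / Delta N W = (-1)^(n choose 2) * (prod P {0..<n} * prod (\<lambda>j. 1 / F j) {0..<n}) * Delta2 n U V / (Delta n U * Delta n V)"
  proof -
    have pF: "prod (\<lambda>j. 1 / F j) {0..<n} = 1 / prod F {0..<n}" by (simp add: prod_dividef)
    have D2: "Delta2 n U V \<noteq> 0" using UV_distinct unfolding Delta2_def by (auto simp: prod_zero_iff)
    define c :: complex where "c = (-1)^(n choose 2)"
    define s :: complex where "s = (-1)^(n*n')"
    have s0: "s \<noteq> 0" by (simp add: s_def)
    have cc: "c * c = 1" using sgn by (simp add: c_def)
    have "c * (c * Delta n V ^ 2 * XV * (1 / (Delta2 n U V * XU))) * Delta2 n U V / (Delta n U * Delta n V)
       = (c * c) * (Delta n V * XV) / (Delta n U * XU)"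
      using dU dV XU0 XV0 D2 by (simp add: field_simps power2_eq_square)
    also have "\<dots> = Delta n V * Delta n' A * (s * XV) / (Delta n U * Delta n' A * (s * XU))"
      unfolding cc using dAA s0 by simp
    finally show ?thesis unfolding pF prodF prodP DR DWf c_def[symmetric] s_def[symmetric] by simp
  qed
  finally show ?thesis unfolding detM by (simp add: ac_simps)
qed

end
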